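(* Let $p$ be an odd prime, $M$ a Bousfield module and $x\in M$. There is some $k\ge1$ such that $\Phi_nx\equiv0\pmod p$ (i.e. $\Phi_nx\in p\,Rx$) for all $n\ge p^k(p-1)$.
   Context: $\mathbb{Z}_{(p)}$ denotes the $p$-local integers. Let $R=\mathbb{Z}_{(p)}[\mathbb{Z}_{(p)}^\times]$ be the group ring of the units of $\mathbb{Z}_{(p)}$, writing $\Psi^j\in R$ for $j\in\mathbb{Z}_{(p)}^\times$. Fix an integer $q$ primitive modulo $p^2$; put $q_i=q^{(-1)^i\lfloor i/2\rfloor}$, $\Theta_n(X)=\prod_{i=1}^n(X-q_i)$ and $\Phi_n=\Theta_n(\Psi^q)\in R$. A Bousfield module is an $R$-module $M$ such that for each $x\in M$: (a) $Rx$ is finitely generated over $\mathbb{Z}_{(p)}$; (b) for each $j\in\mathbb{Z}_{(p)}^\times$, $\Psi^j$ acts on $Rx\otimes\mathbb{Q}$ by a diagonalisable matrix whose eigenvalues are integer powers of $j$; (c) for each $m\ge1$ the action of $\mathbb{Z}_{(p)}^\times$ on $Rx/p^mRx$ factors through $\mathbb{Z}_{(p)}^\times\to(\mathbb{Z}/p^k\mathbb{Z})^\times$ for sufficiently large $k$. *)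

theory Defs
  imports "HOL-Number_Theory.Number_Theory"
begin

definition Zp :: "int \<Rightarrow> rat set" where
  "Zp p = {r. \<not> p dvd snd (quotient_of r)}"

definition Zp_units :: "int \<Rightarrow> rat set" where
  "Zp_units p = {r. \<not> p dvd snd (quotient_of r) \<and> \<not> p dvd fst (quotient_of r)}"

definition primitive_mod :: "int \<Rightarrow> int \<Rightarrow> bool" where
  "primitive_mod q m \<longleftrightarrow> coprime q m \<and>
     (\<forall>k::nat. 0 < k \<and> k < totient (nat m) \<longrightarrow> \<not> [q ^ k = 1] (mod m))"

text \<open>An R-module, R = Z_(p)[Z_(p)^x]: an abelian group with a Z_(p)-module structure
  (scalar action sc) and a Z_(p)-linear action psi of the group Z_(p)^x.\<close>
definition R_module :: "int \<Rightarrow> (rat \<Rightarrow> 'm::ab_group_add \<Rightarrow> 'm) \<Rightarrow> (rat \<Rightarrow> 'm \<Rightarrow> 'm) \<Rightarrow> bool" where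
  "R_module p sc psi \<longleftrightarrow>
     (\<forall>a\<in>Zp p. \<forall>b\<in>Zp p. \<forall>x. sc (a + b) x = sc a x + sc b x) \<and>
     (\<forall>a\<in>Zp p. \<forall>x y. sc a (x + y) = sc a x + sc a y) \<and>
     (\<forall>a\<in>Zp p. \<forall>b\<in>Zp p. \<forall>x. sc (a * b) x = sc a (sc b x)) \<and>
     (\<forall>x. sc 1 x = x) \<and>
     (\<forall>j\<in>Zp_units p. \<forall>x y. psi j (x + y) = psi j x + psi j y) \<and>
     (\<forall>j\<in>Zp_units p. \<forall>a\<in>Zp p. \<forall>x. psi j (sc a x) = sc a (psi j x)) \<and>
     (\<forall>x. psi 1 x = x) \<and>
     (\<forall>j\<in>Zp_units p. \<forall>k\<in>Zp_units p. \<forall>x. psi (j * k) x = psi j (psi k x))"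

definition Rspan :: "int \<Rightarrow> (rat \<Rightarrow> 'm::ab_group_add \<Rightarrow> 'm) \<Rightarrow> (rat \<Rightarrow> 'm \<Rightarrow> 'm) \<Rightarrow> 'm \<Rightarrow> 'm set" where
  "Rspan p sc psi x = {y. \<exists>J c. finite J \<and> J \<subseteq> Zp_units p \<and> (\<forall>j\<in>J. c j \<in> Zp p) \<and>
                          y = (\<Sum>j\<in>J. sc (c j) (psi j x))}"

definition Zp_span :: "int \<Rightarrow> (rat \<Rightarrow> 'm::ab_group_add \<Rightarrow> 'm) \<Rightarrow> 'm set \<Rightarrow> 'm set" where
  "Zp_span p sc S = {y. \<exists>F c. finite F \<and> F \<subseteq> S \<and> (\<forall>s\<in>F. c s \<in> Zp p) \<and>
                          y = (\<Sum>s\<in>F. sc (c s) s)}"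

text \<open>y maps to zero in (R x) \<otimes> Q, i.e. y is a torsion element.\<close>
definition is_torsion :: "int \<Rightarrow> (rat \<Rightarrow> 'm::ab_group_add \<Rightarrow> 'm) \<Rightarrow> 'm \<Rightarrow> bool" where
  "is_torsion p sc y \<longleftrightarrow> (\<exists>a\<in>Zp p. a \<noteq> 0 \<and> sc a y = 0)"

definition smul_set :: "(rat \<Rightarrow> 'm \<Rightarrow> 'm) \<Rightarrow> rat \<Rightarrow> 'm set \<Rightarrow> 'm set" where
  "smul_set sc a A = sc a ` A"

text \<open>Bousfield module conditions (a), (b), (c).
  (b) psi j acts on (R x) \<otimes> Q diagonalisably with eigenvalues integer powers of j:
  (R x) \<otimes> Q is spanned (over Q) by eigenvectors y \<otimes> 1, y in R x, with eigenvalue j powi k.\<close>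
definition Bousfield_module :: "int \<Rightarrow> (rat \<Rightarrow> 'm::ab_group_add \<Rightarrow> 'm) \<Rightarrow> (rat \<Rightarrow> 'm \<Rightarrow> 'm) \<Rightarrow> bool" where
  "Bousfield_module p sc psi \<longleftrightarrow> R_module p sc psi \<and>
    (\<forall>x. 
      \<comment> \<open>(a)\<close>
      (\<exists>S. finite S \<and> Rspan p sc psi x = Zp_span p sc S) \<and>
      \<comment> \<open>(b)\<close>
      (\<forall>j\<in>Zp_units p. \<exists>Y kk. finite Y \<and> Y \<subseteq> Rspan p sc psi x \<and>
          (\<forall>y\<in>Y. is_torsion p sc (psi j y - sc (j powi kk y) y)) \<and>
          (\<forall>z\<in>Rspan p sc psi x. \<exists>a\<in>Zp p. a \<noteq> 0 \<and>
               (\<exists>w\<in>Zp_span p sc Y. is_torsion p sc (sc a z - w)))) \<and>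
      \<comment> \<open>(c)\<close>
      (\<forall>m::nat. m \<ge> 1 \<longrightarrow> (\<exists>k::nat. \<forall>j\<in>Zp_units p. \<forall>j'\<in>Zp_units p.
          (j - j') / of_int (p ^ k) \<in> Zp p \<longrightarrow>
          (\<forall>y\<in>Rspan p sc psi x.
             psi j y - psi j' y \<in> smul_set sc (of_int (p ^ m)) (Rspan p sc psi x)))))"

definition q_idx :: "int \<Rightarrow> nat \<Rightarrow> rat" where
  "q_idx q i = (of_int q) powi ((-1) ^ i * int (i div 2))"

text \<open>Phi_n = Theta_n(psi q) = prod_{i=1..n} (psi q - q_i), acting on M.\<close>
fun Phi :: "(rat \<Rightarrow> 'm::ab_group_add \<Rightarrow> 'm) \<Rightarrow> (rat \<Rightarrow> 'm \<Rightarrow> 'm) \<Rightarrow> int \<Rightarrow> nat \<Rightarrow> 'm \<Rightarrow> 'm" where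
  "Phi sc psi q 0 y = y"
| "Phi sc psi q (Suc n) y = psi (of_int q) (Phi sc psi q n y) - sc (q_idx q (Suc n)) (Phi sc psi q n y)"

end

theory Submission
  imports Defs "HOL-Computational_Algebra.Polynomial" "HOL-Computational_Algebra.Primes"
begin


lemma prime_ndvd1: "prime (p::int) \<Longrightarrow> \<not> p dvd 1"
  using not_prime_unit by blast

lemma Zp_int: "prime p \<Longrightarrow> rat_of_int a \<in> Zp p"
  using prime_ndvd1[of p] by (simp add: Zp_def)

lemma frac_den_dvd:
  assumes "b \<noteq> 0" "quotient_of (rat_of_int a / rat_of_int b) = (n, e)"
  shows "e dvd b" "n dvd a"
proof -
  have r: "rat_of_int a / rat_of_int b = of_int n / of_int e" using quotient_of_div[OF assms(2)] .
  have e: "e > 0" using quotient_of_denom_pos[OF assms(2)] .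
  have cp: "coprime n e" using quotient_of_coprime[OF assms(2)] .
  have "rat_of_int (a * e) = rat_of_int (n * b)" using r e assms(1)
    by (simp add: field_simps)
  hence eq: "a * e = n * b" by (simp only: of_int_eq_iff)
  have "e dvd n * b" using eq by (metis dvd_triv_right)
  thus "e dvd b" using cp by (metis coprime_commute coprime_dvd_mult_right_iff mult.commute)
  have "n dvd a * e" using eq by (metis dvd_triv_left)
  thus "n dvd a" using cp by (metis coprime_dvd_mult_right_iff mult.commute)
qed

lemma Zp_frac:
  assumes "prime p" "\<not> p dvd b" shows "rat_of_int a / rat_of_int b \<in> Zp p"
proof -
  have b: "b \<noteq> 0" using assms by auto
  obtain n e where qo: "quotient_of (rat_of_int a / rat_of_int b) = (n, e)" by fastforce
  have "e dvd b" using frac_den_dvd[OF b qo] by simp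
  hence "\<not> p dvd e" using assms(2) dvd_trans by blast
  thus ?thesis using qo by (simp add: Zp_def)
qed

lemma Zp_units_frac:
  assumes "prime p" "\<not> p dvd a" "\<not> p dvd b" shows "rat_of_int a / rat_of_int b \<in> Zp_units p"
proof -
  have b: "b \<noteq> 0" using assms by auto
  obtain n e where qo: "quotient_of (rat_of_int a / rat_of_int b) = (n, e)" by fastforce
  have "e dvd b" "n dvd a" using frac_den_dvd[OF b qo] by simp_all
  hence "\<not> p dvd e" "\<not> p dvd n" using assms(2,3) dvd_trans by blast+
  thus ?thesis using qo by (simp add: Zp_units_def)
qed

lemma Zp_rep: "r \<in> Zp p \<Longrightarrow> \<exists>a b. \<not> p dvd b \<and> r = rat_of_int a / rat_of_int b"
  unfolding Zp_def using quotient_of_div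
  by (metis (no_types, lifting) mem_Collect_eq prod.collapse)

lemma Zp_units_rep: "r \<in> Zp_units p \<Longrightarrow> \<exists>a b. \<not> p dvd a \<and> \<not> p dvd b \<and> r = rat_of_int a / rat_of_int b"
  unfolding Zp_units_def using quotient_of_div
  by (metis (no_types, lifting) mem_Collect_eq prod.collapse)

lemma Zp_add: assumes "prime p" "r \<in> Zp p" "s \<in> Zp p" shows "r + s \<in> Zp p"
proof -
  obtain a b c e where "\<not> p dvd b" "r = rat_of_int a / rat_of_int b" "\<not> p dvd e" "s = rat_of_int c / rat_of_int e"
    using Zp_rep assms by metis
  moreover have "\<not> p dvd b * e" using calculation assms(1) prime_dvd_mult_iff by blast
  moreover have "b \<noteq> 0" "e \<noteq> 0" using calculation by auto
  moreover have "r + s = rat_of_int (a * e + c * b) / rat_of_int (b * e)"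
    using calculation by (simp add: field_simps)
  ultimately show ?thesis using Zp_frac[OF assms(1), of "b * e" "a * e + c * b"]
    by simp
qed

lemma Zp_mult: assumes "prime p" "r \<in> Zp p" "s \<in> Zp p" shows "r * s \<in> Zp p"
proof -
  obtain a b c e where "\<not> p dvd b" "r = rat_of_int a / rat_of_int b" "\<not> p dvd e" "s = rat_of_int c / rat_of_int e"
    using Zp_rep assms by metis
  moreover have "\<not> p dvd b * e" using calculation assms(1) prime_dvd_mult_iff by blast
  ultimately show ?thesis using Zp_frac[OF assms(1), of "b * e" "a * c"]
    by simp
qed

lemma Zp_uminus: assumes "prime p" "r \<in> Zp p" shows "- r \<in> Zp p"
  using Zp_mult[OF assms(1) Zp_int[OF assms(1), of "-1"] assms(2)] by simp

lemma Zp_diff: assumes "prime p" "r \<in> Zp p" "s \<in> Zp p" shows "r - s \<in> Zp p"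
  using Zp_add[OF assms(1,2) Zp_uminus[OF assms(1,3)]] by simp

lemma Zp_units_Zp: "Zp_units p \<subseteq> Zp p" unfolding Zp_units_def Zp_def by auto

lemma Zp_units_nz: "r \<in> Zp_units p \<Longrightarrow> r \<noteq> 0" unfolding Zp_units_def by auto

lemma Zp_units_mult: assumes "prime p" "r \<in> Zp_units p" "s \<in> Zp_units p" shows "r * s \<in> Zp_units p"
proof -
  obtain a b c e where "\<not> p dvd a" "\<not> p dvd b" "r = rat_of_int a / rat_of_int b"
     "\<not> p dvd c" "\<not> p dvd e" "s = rat_of_int c / rat_of_int e"
    using Zp_units_rep assms by metis
  moreover have "\<not> p dvd b * e" "\<not> p dvd a * c" using calculation assms(1) prime_dvd_mult_iff by blast+
  ultimately show ?thesis using Zp_units_frac[OF assms(1), of "a * c" "b * e"]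
    by simp
qed

lemma Zp_units_int: "prime p \<Longrightarrow> \<not> p dvd a \<Longrightarrow> rat_of_int a \<in> Zp_units p"
  using prime_ndvd1[of p] by (simp add: Zp_units_def)

lemma Zp_L:
  assumes "prime p" "\<not> p dvd b" "p dvd (a - c * b)"
  shows "\<exists>s\<in>Zp p. rat_of_int a / rat_of_int b = rat_of_int c + rat_of_int p * s"
proof -
  obtain t where t: "a - c * b = p * t" using assms(3) by blast
  have b: "b \<noteq> 0" using assms by auto
  have "rat_of_int t / rat_of_int b \<in> Zp p" using Zp_frac assms by blast
  moreover have "rat_of_int a / rat_of_int b = rat_of_int c + rat_of_int p * (rat_of_int t / rat_of_int b)"
  proof -
    have "rat_of_int a = rat_of_int (c * b + p * t)" using t by (simp add: algebra_simps)
    thus ?thesis using b by (simp add: field_simps)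
  qed
  ultimately show ?thesis by blast
qed


locale bm =
  fixes p :: int and sc psi :: "rat \<Rightarrow> 'm::ab_group_add \<Rightarrow> 'm"
  assumes prime: "prime p" and RM: "R_module p sc psi"
begin

lemma sc_add: "a \<in> Zp p \<Longrightarrow> b \<in> Zp p \<Longrightarrow> sc (a + b) y = sc a y + sc b y"
  using RM unfolding R_module_def by blast
lemma sc_addr: "a \<in> Zp p \<Longrightarrow> sc a (y + z) = sc a y + sc a z"
  using RM unfolding R_module_def by blast
lemma sc_mult: "a \<in> Zp p \<Longrightarrow> b \<in> Zp p \<Longrightarrow> sc (a * b) y = sc a (sc b y)"
  using RM unfolding R_module_def by blast
lemma sc_one[simp]: "sc 1 y = y"
  using RM unfolding R_module_def by blast
lemma psi_add: "j \<in> Zp_units p \<Longrightarrow> psi j (y + z) = psi j y + psi j z"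
  using RM unfolding R_module_def by blast
lemma psi_sc: "j \<in> Zp_units p \<Longrightarrow> a \<in> Zp p \<Longrightarrow> psi j (sc a y) = sc a (psi j y)"
  using RM unfolding R_module_def by blast
lemma psi_one[simp]: "psi 1 y = y"
  using RM unfolding R_module_def by blast
lemma psi_mult: "j \<in> Zp_units p \<Longrightarrow> k \<in> Zp_units p \<Longrightarrow> psi (j * k) y = psi j (psi k y)"
  using RM unfolding R_module_def by blast

lemma Zi: "rat_of_int a \<in> Zp p" using Zp_int[OF prime] .
lemma Z0: "0 \<in> Zp p" using Zi[of 0] by simp
lemma Z1: "1 \<in> Zp p" using Zi[of 1] by simp

lemma sc_zero[simp]: "sc 0 y = 0"
proof -
  have "sc (0 + 0) y = sc 0 y + sc 0 y" using sc_add Z0 by blast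
  thus ?thesis by simp
qed
lemma sc_0r: "a \<in> Zp p \<Longrightarrow> sc a 0 = 0"
proof -
  assume a: "a \<in> Zp p"
  have "sc a (0 + 0) = sc a 0 + sc a 0" using sc_addr a by blast
  thus ?thesis by simp
qed
lemma sc_minusr: "a \<in> Zp p \<Longrightarrow> sc a (- y) = - sc a y"
proof -
  assume a: "a \<in> Zp p"
  have "sc a (- y) + sc a y = 0" using sc_addr[OF a, of "-y" y] sc_0r[OF a] by simp
  thus ?thesis by (simp add: eq_neg_iff_add_eq_0)
qed
lemma sc_diffr: "a \<in> Zp p \<Longrightarrow> sc a (y - z) = sc a y - sc a z"
  using sc_addr[of a y "-z"] sc_minusr[of a z] by simp
lemma sc_diffl: "a \<in> Zp p \<Longrightarrow> b \<in> Zp p \<Longrightarrow> sc (a - b) y = sc a y - sc b y"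
proof -
  assume a: "a \<in> Zp p" and b: "b \<in> Zp p"
  have "a - b \<in> Zp p" using Zp_diff[OF prime a b] .
  hence "sc a y = sc (a - b) y + sc b y" using sc_add[OF _ b, of "a - b"] by simp
  thus ?thesis by (simp add: algebra_simps)
qed
lemma psi_0: "j \<in> Zp_units p \<Longrightarrow> psi j 0 = 0"
proof -
  assume a: "j \<in> Zp_units p"
  have "psi j (0 + 0) = psi j 0 + psi j 0" using psi_add a by blast
  thus ?thesis by simp
qed
lemma psi_minus: "j \<in> Zp_units p \<Longrightarrow> psi j (- y) = - psi j y"
proof -
  assume a: "j \<in> Zp_units p"
  have "psi j (- y) + psi j y = 0" using psi_add[OF a, of "-y" y] psi_0[OF a] by simp
  thus ?thesis by (simp add: eq_neg_iff_add_eq_0)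
qed
lemma psi_diff: "j \<in> Zp_units p \<Longrightarrow> psi j (y - z) = psi j y - psi j z"
  using psi_add[of j y "-z"] psi_minus[of j z] by simp

lemma sc_sum: "a \<in> Zp p \<Longrightarrow> sc a (\<Sum>i\<in>A. f i) = (\<Sum>i\<in>A. sc a (f i))"
  using sum_comp_morphism[of "sc a" f A] sc_0r sc_addr by (simp add: comp_def)
lemma psi_sum: "j \<in> Zp_units p \<Longrightarrow> psi j (\<Sum>i\<in>A. f i) = (\<Sum>i\<in>A. psi j (f i))"
  using sum_comp_morphism[of "psi j" f A] psi_0 psi_add by (simp add: comp_def)

lemma Zp_units_1: "1 \<in> Zp_units p"
  using Zp_units_int[OF prime, of 1] prime_ndvd1[OF prime] by simp

definition Rx :: "'m \<Rightarrow> 'm set" where "Rx x = Rspan p sc psi x"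
definition pRx :: "'m \<Rightarrow> 'm set" where "pRx x = smul_set sc (of_int p) (Rx x)"

lemma Rx_x: "x \<in> Rx x"
  unfolding Rx_def Rspan_def
  by (rule CollectI, rule exI[of _ "{1}"], rule exI[of _ "\<lambda>_. 1"]) (simp add: Zp_units_1 Z1)

lemma Rx_0: "0 \<in> Rx x"
  unfolding Rx_def Rspan_def
  by (rule CollectI, rule exI[of _ "{}"], rule exI[of _ "\<lambda>_. 1"]) simp

lemma Rx_add: assumes "y \<in> Rx x" "z \<in> Rx x" shows "y + z \<in> Rx x"
proof -
  obtain J1 c1 where 1: "finite J1" "J1 \<subseteq> Zp_units p" "\<forall>j\<in>J1. c1 j \<in> Zp p" "y = (\<Sum>j\<in>J1. sc (c1 j) (psi j x))"
    using assms(1) unfolding Rx_def Rspan_def by blast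
  obtain J2 c2 where 2: "finite J2" "J2 \<subseteq> Zp_units p" "\<forall>j\<in>J2. c2 j \<in> Zp p" "z = (\<Sum>j\<in>J2. sc (c2 j) (psi j x))"
    using assms(2) unfolding Rx_def Rspan_def by blast
  define d1 where "d1 j = (if j \<in> J1 then c1 j else 0)" for j
  define d2 where "d2 j = (if j \<in> J2 then c2 j else 0)" for j
  have d1Z: "d1 j \<in> Zp p" for j using 1 Z0 d1_def by auto
  have d2Z: "d2 j \<in> Zp p" for j using 2 Z0 d2_def by auto
  have e1: "y = (\<Sum>j\<in>J1 \<union> J2. sc (d1 j) (psi j x))"
    unfolding 1(4) by (rule sum.mono_neutral_cong_left) (auto simp: 1 2 d1_def)
  have e2: "z = (\<Sum>j\<in>J1 \<union> J2. sc (d2 j) (psi j x))"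
    unfolding 2(4) by (rule sum.mono_neutral_cong_left) (auto simp: 1 2 d2_def)
  have "y + z = (\<Sum>j\<in>J1 \<union> J2. sc (d1 j + d2 j) (psi j x))"
    unfolding e1 e2 sum.distrib[symmetric] using sc_add d1Z d2Z by simp
  moreover have "d1 j + d2 j \<in> Zp p" for j using Zp_add[OF prime d1Z d2Z] .
  ultimately show ?thesis unfolding Rx_def Rspan_def
    by (intro CollectI exI[of _ "J1 \<union> J2"] exI[of _ "\<lambda>j. d1 j + d2 j"]) (use 1 2 in auto)
qed

lemma Rx_sc: assumes "a \<in> Zp p" "y \<in> Rx x" shows "sc a y \<in> Rx x"
proof -
  obtain J1 c1 where 1: "finite J1" "J1 \<subseteq> Zp_units p" "\<forall>j\<in>J1. c1 j \<in> Zp p" "y = (\<Sum>j\<in>J1. sc (c1 j) (psi j x))"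
    using assms(2) unfolding Rx_def Rspan_def by blast
  have "sc a y = (\<Sum>j\<in>J1. sc (a * c1 j) (psi j x))"
    unfolding 1(4) using sc_sum[OF assms(1)] sc_mult assms(1) 1(3) by simp
  moreover have "\<forall>j\<in>J1. a * c1 j \<in> Zp p" using Zp_mult[OF prime assms(1)] 1(3) by blast
  ultimately show ?thesis unfolding Rx_def Rspan_def
    by (intro CollectI exI[of _ "J1"] exI[of _ "\<lambda>j. a * c1 j"]) (use 1 in auto)
qed

lemma Rx_psi: assumes "k \<in> Zp_units p" "y \<in> Rx x" shows "psi k y \<in> Rx x"
proof -
  obtain J1 c1 where 1: "finite J1" "J1 \<subseteq> Zp_units p" "\<forall>j\<in>J1. c1 j \<in> Zp p" "y = (\<Sum>j\<in>J1. sc (c1 j) (psi j x))"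
    using assms(2) unfolding Rx_def Rspan_def by blast
  have k0: "k \<noteq> 0" using Zp_units_nz assms(1) by blast
  have inj: "inj_on (\<lambda>j. k * j) J1" using k0 by (auto simp: inj_on_def)
  have "psi k y = (\<Sum>j\<in>J1. sc (c1 j) (psi (k * j) x))"
    unfolding 1(4) psi_sum[OF assms(1)]
  proof (rule sum.cong)
    fix j assume j: "j \<in> J1"
    have "psi k (sc (c1 j) (psi j x)) = sc (c1 j) (psi k (psi j x))"
      by (rule psi_sc[OF assms(1)]) (use 1(3) j in blast)
    also have "psi k (psi j x) = psi (k * j) x" by (rule psi_mult[OF assms(1), symmetric]) (use 1(2) j in blast)
    finally show "psi k (sc (c1 j) (psi j x)) = sc (c1 j) (psi (k * j) x)" .
  qed simp
  also have "\<dots> = (\<Sum>j\<in>(\<lambda>j. k * j) ` J1. sc (c1 (j / k)) (psi j x))"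
    unfolding sum.reindex[OF inj] using k0 by simp
  finally have e: "psi k y = (\<Sum>j\<in>(\<lambda>j. k * j) ` J1. sc (c1 (j / k)) (psi j x))" .
  have "(\<lambda>j. k * j) ` J1 \<subseteq> Zp_units p" using Zp_units_mult[OF prime assms(1)] 1(2) by blast
  moreover have "\<forall>j\<in>(\<lambda>j. k * j) ` J1. c1 (j / k) \<in> Zp p" using 1(3) k0 by auto
  ultimately show ?thesis unfolding Rx_def Rspan_def
    by (intro CollectI exI[of _ "(\<lambda>j. k * j) ` J1"] exI[of _ "\<lambda>j. c1 (j / k)"]) (use 1 e in auto)
qed

lemma Rx_uminus: "y \<in> Rx x \<Longrightarrow> - y \<in> Rx x"
proof -
  assume y: "y \<in> Rx x"
  have "sc (1 + (-1)) y = sc 1 y + sc (-1) y" by (rule sc_add[OF Z1]) (use Zi[of "-1"] in simp)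
  hence "y + sc (-1) y = 0" by simp
  hence "- y = sc (-1) y" by (simp add: neg_eq_iff_add_eq_0)
  hence "sc (-1) y = - y" by simp
  thus ?thesis using Rx_sc[OF Zi[of "-1"] y] by simp
qed

lemma Rx_diff: "y \<in> Rx x \<Longrightarrow> z \<in> Rx x \<Longrightarrow> y - z \<in> Rx x"
  using Rx_add[of y x "-z"] Rx_uminus[of z x] by simp

lemma Zp_p: "rat_of_int p \<in> Zp p" using Zi .

lemma pRx_of: "y \<in> Rx x \<Longrightarrow> sc (of_int p) y \<in> pRx x"
  unfolding pRx_def smul_set_def by blast

lemma pRx_E: "z \<in> pRx x \<Longrightarrow> \<exists>y\<in>Rx x. z = sc (of_int p) y"
  unfolding pRx_def smul_set_def by blast

lemma pRx_0: "0 \<in> pRx x" using pRx_of[OF Rx_0] sc_0r[OF Zp_p] by simp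

lemma pRx_add: "y \<in> pRx x \<Longrightarrow> z \<in> pRx x \<Longrightarrow> y + z \<in> pRx x"
proof -
  assume "y \<in> pRx x" "z \<in> pRx x"
  then obtain u v where "u \<in> Rx x" "v \<in> Rx x" "y = sc (of_int p) u" "z = sc (of_int p) v"
    using pRx_E by blast
  thus ?thesis using pRx_of[OF Rx_add] sc_addr[OF Zp_p] by simp
qed

lemma pRx_uminus: "y \<in> pRx x \<Longrightarrow> - y \<in> pRx x"
proof -
  assume "y \<in> pRx x"
  then obtain u where "u \<in> Rx x" "y = sc (of_int p) u"
    using pRx_E by blast
  thus ?thesis using pRx_of[OF Rx_uminus] sc_minusr[OF Zp_p] by simp
qed

lemma pRx_diff: "y \<in> pRx x \<Longrightarrow> z \<in> pRx x \<Longrightarrow> y - z \<in> pRx x"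
  using pRx_add[of y x "-z"] pRx_uminus[of z x] by simp

lemma pRx_sc: assumes "a \<in> Zp p" "y \<in> pRx x" shows "sc a y \<in> pRx x"
proof -
  obtain z where z: "z \<in> Rx x" "y = sc (of_int p) z" using pRx_E assms(2) by blast
  have "sc a y = sc (a * of_int p) z" using sc_mult assms(1) Zp_p z by simp
  also have "\<dots> = sc (of_int p * a) z" by (simp add: mult.commute)
  also have "\<dots> = sc (of_int p) (sc a z)" using sc_mult[OF Zp_p assms(1)] by simp
  finally show ?thesis using pRx_of Rx_sc[OF assms(1) z(1)] by simp
qed

lemma pRx_psi: assumes "k \<in> Zp_units p" "y \<in> pRx x" shows "psi k y \<in> pRx x"
proof -
  obtain z where z: "z \<in> Rx x" "y = sc (of_int p) z" using pRx_E assms(2) by blast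
  have "psi k y = sc (of_int p) (psi k z)" using psi_sc assms(1) Zp_p z by simp
  thus ?thesis using pRx_of Rx_psi[OF assms(1) z(1)] by simp
qed

lemma pRx_Rx: "y \<in> pRx x \<Longrightarrow> y \<in> Rx x"
  using pRx_E Rx_sc Zp_p by blast

end


locale bmq = bm p sc psi for p :: int and sc psi :: "rat \<Rightarrow> 'm::ab_group_add \<Rightarrow> 'm" +
  fixes q :: int
  assumes qnd: "\<not> p dvd q"
begin

definition T :: "'m \<Rightarrow> 'm" where "T = psi (of_int q)"

lemma q_unit: "rat_of_int q \<in> Zp_units p" using Zp_units_int[OF prime qnd] .

lemma T_add: "T (y + z) = T y + T z" unfolding T_def using psi_add[OF q_unit] .
lemma T_0[simp]: "T 0 = 0" unfolding T_def using psi_0[OF q_unit] .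
lemma T_diff: "T (y - z) = T y - T z" unfolding T_def using psi_diff[OF q_unit] .
lemma T_sc: "a \<in> Zp p \<Longrightarrow> T (sc a y) = sc a (T y)" unfolding T_def using psi_sc[OF q_unit] .
lemma T_sum: "T (\<Sum>i\<in>A. f i) = (\<Sum>i\<in>A. T (f i))" unfolding T_def using psi_sum[OF q_unit] .
lemma Tp_sc: "a \<in> Zp p \<Longrightarrow> (T ^^ n) (sc a y) = sc a ((T ^^ n) y)"
  by (induction n) (auto simp: T_sc)

definition act :: "int poly \<Rightarrow> 'm \<Rightarrow> 'm" where
  "act P y = (\<Sum>i<Suc (degree P). sc (of_int (Polynomial.coeff P i)) ((T ^^ i) y))"

lemma act_bound: assumes "degree P < N"
  shows "act P y = (\<Sum>i<N. sc (of_int (Polynomial.coeff P i)) ((T ^^ i) y))"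
  unfolding act_def
proof (rule sum.mono_neutral_left)
  show "\<forall>i\<in>{..<N} - {..<Suc (degree P)}. sc (rat_of_int (Polynomial.coeff P i)) ((T ^^ i) y) = 0"
    by (auto simp: coeff_eq_0)
qed (use assms in auto)

lemma act_pCons: "act (pCons a P) y = sc (of_int a) y + T (act P y)"
proof -
  define N where "N = Suc (degree P)"
  have d: "degree (pCons a P) < Suc N" using degree_pCons_le[of a P] N_def by simp
  have "act (pCons a P) y = (\<Sum>i<Suc N. sc (of_int (Polynomial.coeff (pCons a P) i)) ((T ^^ i) y))"
    using act_bound[OF d] .
  also have "\<dots> = sc (of_int a) y + (\<Sum>i<N. sc (of_int (Polynomial.coeff P i)) (T ((T ^^ i) y)))"
    unfolding sum.lessThan_Suc_shift by (simp add: funpow_swap1)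
  also have "(\<Sum>i<N. sc (of_int (Polynomial.coeff P i)) (T ((T ^^ i) y))) = T (act P y)"
    unfolding act_def N_def T_sum using T_sc Zi by simp
  finally show ?thesis .
qed

lemma act_0[simp]: "act 0 y = 0" unfolding act_def by simp

lemma act_add: "act (P + Q) y = act P y + act Q y"
proof -
  define N where "N = Suc (max (degree P) (degree Q))"
  have d: "degree P < N" "degree Q < N" "degree (P + Q) < N"
    using degree_add_le_max[of P Q] N_def by auto
  show ?thesis unfolding act_bound[OF d(1)] act_bound[OF d(2)] act_bound[OF d(3)]
    sum.distrib[symmetric] by (rule sum.cong) (auto simp: sc_add Zi)
qed

lemma act_diff: "act (P - Q) y = act P y - act Q y"
  using act_add[of "P - Q" Q y] by (simp add: algebra_simps)

lemma act_smult: "act (smult a P) y = sc (of_int a) (act P y)"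
proof -
  have d: "degree (smult a P) < Suc (degree P)" using degree_smult_le[of a P] by simp
  show ?thesis unfolding act_bound[OF d] unfolding act_def sc_sum[OF Zi]
    by (rule sum.cong) (auto simp: sc_mult[OF Zi Zi])
qed

lemma act_mult: "act (P * Q) y = act P (act Q y)"
proof (induction P)
  case (pCons a P)
  show ?case using pCons by (simp add: act_add act_smult act_pCons)
qed simp

lemma act_Rx: "y \<in> Rx x \<Longrightarrow> act P y \<in> Rx x"
proof (induction P)
  case 0
  then show ?case using Rx_0 by simp
next
  case (pCons a P)
  then show ?case unfolding act_pCons T_def using Rx_add Rx_sc Zi Rx_psi q_unit by blast
qed

lemma act_one: "act 1 y = y"
  using act_pCons[of 1 0 y] by (simp add: one_pCons)

lemma act_monom: "act (Polynomial.monom 1 n) y = (T ^^ n) y"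
proof (induction n)
  case 0
  then show ?case using act_one by (simp add: one_pCons[symmetric] monom_0)
next
  case (Suc n)
  then show ?case by (simp add: monom_Suc act_pCons)
qed

lemma act_pdvd: assumes "[:p:] dvd P" "y \<in> Rx x" shows "act P y \<in> pRx x"
proof -
  obtain H where "P = [:p:] * H" using assms(1) by blast
  hence "act P y = sc (of_int p) (act H y)" by (simp add: act_smult)
  thus ?thesis using pRx_of act_Rx assms(2) by simp
qed

lemma Tpow_psi: "(T ^^ n) y = psi (of_int (q ^ n)) y"
proof (induction n arbitrary: y)
  case 0
  then show ?case by simp
next
  case (Suc n)
  have u: "rat_of_int (q ^ n) \<in> Zp_units p"
    using Zp_units_int[OF prime] qnd prime prime_dvd_power by blast
  have "(T ^^ Suc n) y = T (psi (of_int (q ^ n)) y)" using Suc by simp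
  also have "\<dots> = psi (of_int q * of_int (q ^ n)) y" unfolding T_def using psi_mult[OF q_unit u] by simp
  finally show ?case by simp
qed

end


lemma dvd_pow_diff: "(a - b :: 'a::comm_ring_1) dvd (a ^ n - b ^ n)"
proof (induction n)
  case (Suc n)
  have "a ^ Suc n - b ^ Suc n = a * (a ^ n - b ^ n) + b ^ n * (a - b)" by (simp add: algebra_simps)
  thus ?case using Suc by (simp add: dvd_add)
qed simp

lemma cong_pow_dvd: "(c :: 'a::comm_ring_1) dvd (a - b) \<Longrightarrow> c dvd (a ^ n - b ^ n)"
  using dvd_trans dvd_pow_diff by blast

lemma root_count:
  fixes p :: int
  assumes "prime p" "finite S"
    "\<forall>a\<in>S. \<forall>b\<in>S. a \<noteq> b \<longrightarrow> \<not> p dvd (a - b)"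
    "degree g < card S" "\<forall>a\<in>S. p dvd poly g a"
  shows "[:p:] dvd g"
  using assms(2-5)
proof (induction S arbitrary: g rule: finite_induct)
  case empty
  then show ?case by simp
next
  case (insert a S)
  define h where "h = synthetic_div g a"
  have geq: "g = [:-a, 1:] * h + [:poly g a:]" using synthetic_div_correct'[of a g] h_def by simp
  have pa: "p dvd poly g a" using insert.prems by simp
  have hd: "[:p:] dvd h"
  proof (cases "card S = 0")
    case True
    hence "degree g = 0" using insert by simp
    hence "h = 0" using h_def synthetic_div_eq_0_iff by blast
    then show ?thesis by simp
  next
    case False
    have "degree g < Suc (card S)" using insert.prems(2) insert.hyps by simp
    hence "degree h < card S" using False unfolding h_def degree_synthetic_div
      by linarith
    moreover have "\<forall>b\<in>S. p dvd poly h b"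
    proof
      fix b assume b: "b \<in> S"
      have "poly g b = (b - a) * poly h b + poly g a" using arg_cong[OF geq, of "\<lambda>P. poly P b"] by (simp add: algebra_simps)
      hence "p dvd (b - a) * poly h b" using pa insert.prems(3) b
        by (metis dvd_add_left_iff insert_iff)
      moreover have "\<not> p dvd (b - a)" using insert.prems(1) b insert.hyps(2) by (metis insertCI)
      ultimately show "p dvd poly h b" using assms(1) prime_dvd_mult_iff by blast
    qed
    moreover have "\<forall>a\<in>S. \<forall>b\<in>S. a \<noteq> b \<longrightarrow> \<not> p dvd (a - b)" using insert.prems(1) by blast
    ultimately show ?thesis using insert.IH by blast
  qed
  have "[:p:] dvd [:poly g a:]" using pa by (simp add: const_poly_dvd_const_poly_iff)
  thus ?case using hd geq by (metis dvd_add dvd_mult)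
qed

lemma frob1:
  fixes p :: int and A :: "int poly"
  assumes "prime p" "odd p"
  shows "[:p:] dvd ((A - 1) ^ nat p - (A ^ nat p - 1))"
proof -
  define n where "n = nat p"
  have n2: "n \<ge> 2" using prime_ge_2_int[OF assms(1)] n_def by auto
  have pn: "int n = p" using n_def prime_ge_2_int[OF assms(1)] by simp
  have np: "prime n" using assms(1) unfolding pn[symmetric] prime_int_nat_transfer by simp
  have on: "odd n" using assms(2) unfolding pn[symmetric] by simp
  define f where "f k = of_nat (n choose k) * A ^ k * (-1) ^ (n - k)" for k
  have "(A - 1) ^ n = (\<Sum>k\<le>n. f k)" unfolding f_def using binomial_ring[of A "-1" n] by simp
  also have "{..n} = insert 0 (insert n {1..<n})" using n2 by auto
  also have "(\<Sum>k\<in>insert 0 (insert n {1..<n}). f k) = f 0 + f n + (\<Sum>k\<in>{1..<n}. f k)"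
    using n2 by (simp add: sum.insert)
  finally have e: "(A - 1) ^ n - (A ^ n - 1) = (\<Sum>k\<in>{1..<n}. f k)"
    using on unfolding f_def by simp
  have "[:p:] dvd f k" if "k \<in> {1..<n}" for k
  proof -
    have "n dvd (n choose k)" using dvd_choose_prime[OF _ _ _ np] that n2 by auto
    hence "p dvd int (n choose k)" unfolding pn[symmetric] by (simp only: int_dvd_int_iff)
    hence "[:p:] dvd (of_nat (n choose k) :: int poly)" by (simp add: of_nat_poly const_poly_dvd_const_poly_iff)
    thus ?thesis unfolding f_def by (metis dvd_mult2)
  qed
  hence "[:p:] dvd (\<Sum>k\<in>{1..<n}. f k)" by (intro dvd_sum) auto
  thus ?thesis using e n_def by simp
qed

lemma frob:
  fixes p :: int
  assumes "prime p" "odd p"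
  shows "[:p:] dvd ((Polynomial.monom 1 d - 1) ^ (nat p ^ j) - (Polynomial.monom 1 (d * nat p ^ j) - 1))"
proof (induction j)
  case 0
  then show ?case by simp
next
  case (Suc j)
  define U where "U = (Polynomial.monom (1::int) d - 1) ^ (nat p ^ j)"
  define V where "V = (Polynomial.monom (1::int) (d * nat p ^ j))"
  have "[:p:] dvd (U ^ nat p - (V - 1) ^ nat p)" using cong_pow_dvd Suc U_def V_def by blast
  moreover have "[:p:] dvd ((V - 1) ^ nat p - (V ^ nat p - 1))" using frob1[OF assms] .
  ultimately have "[:p:] dvd (U ^ nat p - (V ^ nat p - 1))"
    by (metis (no_types, lifting) diff_add_cancel dvd_add add_diff_eq)
  moreover have "U ^ nat p = (Polynomial.monom 1 d - 1) ^ (nat p ^ Suc j)" unfolding U_def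
    by (simp add: power_mult[symmetric] mult.commute)
  moreover have "V ^ nat p = monom 1 (d * nat p ^ Suc j)" unfolding V_def monom_power
    by (simp add: ac_simps)
  ultimately show ?case by simp
qed


definition ordq :: "int \<Rightarrow> int \<Rightarrow> nat" where
  "ordq p q = (LEAST d. 0 < d \<and> p dvd q ^ d - 1)"

lemma ordq_ex: fixes p q :: int assumes "prime p" "\<not> p dvd q" shows "\<exists>d>0. p dvd q ^ d - 1"
proof -
  have r: "residues p" unfolding residues_def using prime_gt_1_int[OF assms(1)] by simp
  have "coprime q p" using assms prime_imp_coprime coprime_commute by blast
  hence "[q ^ totient (nat p) = 1] (mod p)" using residues.euler_theorem[OF r] by blast
  moreover have "totient (nat p) > 0" using prime_gt_1_int[OF assms(1)] by simp
  ultimately show ?thesis by (metis cong_iff_dvd_diff cong_sym)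
qed

context
  fixes p q :: int
  assumes pr: "prime p" and qn: "\<not> p dvd q"
begin

lemma ordq_pos: "0 < ordq p q" and ordq_dvd: "p dvd q ^ ordq p q - 1"
  using LeastI_ex[OF ordq_ex[OF pr qn]] unfolding ordq_def by auto

lemma ordq_min: "0 < e \<Longrightarrow> e < ordq p q \<Longrightarrow> \<not> p dvd q ^ e - 1"
  unfolding ordq_def using not_less_Least by blast

lemma ordq_period: "p dvd q ^ a - q ^ (a mod ordq p q)"
proof -
  define d where "d = ordq p q"
  have "q ^ a = (q ^ d) ^ (a div d) * q ^ (a mod d)"
    by (metis power_add power_mult div_mult_mod_eq mult.commute)
  hence e: "q ^ a - q ^ (a mod d) = ((q ^ d) ^ (a div d) - 1 ^ (a div d)) * q ^ (a mod d)"
    by (simp add: algebra_simps)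
  have "p dvd (q ^ d) ^ (a div d) - 1 ^ (a div d)"
    using ordq_dvd dvd_trans dvd_pow_diff d_def by (metis power_one)
  thus ?thesis using e d_def by simp
qed

lemma ordq_distinct: assumes "a < ordq p q" "b < ordq p q" "a \<noteq> b" shows "\<not> p dvd q ^ a - q ^ b"
proof -
  have pq: "\<not> p dvd q ^ k" for k using pr qn prime_dvd_power by blast
  have *: "\<not> p dvd q ^ b - q ^ a" if "a < b" "b < ordq p q" for a b
  proof
    assume "p dvd q ^ b - q ^ a"
    moreover have "q ^ b - q ^ a = q ^ a * (q ^ (b - a) - 1)" using that
      by (simp add: algebra_simps power_add[symmetric])
    ultimately have "p dvd q ^ (b - a) - 1" using pq pr prime_dvd_mult_iff by metis
    thus False using ordq_min[of "b - a"] that by simp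
  qed
  show ?thesis
  proof (cases "a < b")
    case True thus ?thesis using *[of a b] assms by (metis dvd_diff_commute)
  next
    case False thus ?thesis using *[of b a] assms by simp
  qed
qed

lemma cyclo: "[:p:] dvd (\<Prod>f<ordq p q. [:-(q ^ f), 1:]) - (Polynomial.monom 1 (ordq p q) - 1)"
proof -
  define d where "d = ordq p q"
  define C where "C = (\<Prod>f<d. [:-(q ^ f), 1:])"
  define g where "g = C - (Polynomial.monom 1 d - 1)"
  define S where "S = (\<lambda>f. q ^ f) ` {..<d}"
  have d0: "0 < d" using ordq_pos d_def by simp
  have inj: "inj_on (\<lambda>f. q ^ f) {..<d}"
  proof (rule inj_onI)
    fix a b assume "a \<in> {..<d}" "b \<in> {..<d}" "q ^ a = q ^ b"
    thus "a = b" using ordq_distinct[of a b] d_def by force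
  qed
  have cS: "card S = d" unfolding S_def using card_image[OF inj] by simp
  have degC: "degree C = d" unfolding C_def
    by (subst degree_prod_eq_sum_degree) auto
  have lcC: "lead_coeff C = 1" unfolding C_def lead_coeff_prod by simp
  have degM: "degree (Polynomial.monom (1::int) d - 1) \<le> d"
    using degree_diff_le_max[of "Polynomial.monom (1::int) d" 1] degree_monom_le[of "1::int" d] by simp
  have lcM: "Polynomial.coeff (Polynomial.monom (1::int) d - 1) d = 1" using d0 by simp
  have dg: "degree g < d"
  proof -
    have le: "degree g \<le> d" unfolding g_def using degree_diff_le_max[of C "Polynomial.monom 1 d - 1"] degC degM by simp
    have c0: "Polynomial.coeff g d = 0" unfolding g_def using lcC degC lcM by simp
    show ?thesis
    proof (rule ccontr)
      assume "\<not> degree g < d"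
      hence dd: "degree g = d" using le by simp
      hence "lead_coeff g = 0" using c0 by simp
      hence "g = 0" by simp
      thus False using dd d0 by simp
    qed
  qed
  have roots: "\<forall>a\<in>S. p dvd poly g a"
  proof
    fix a assume "a \<in> S"
    then obtain f where f: "f < d" "a = q ^ f" unfolding S_def by auto
    have "poly C a = 0" unfolding C_def poly_prod using f by (auto intro!: prod_zero)
    moreover have "poly (Polynomial.monom 1 d - 1) a = (q ^ d) ^ f - 1 ^ f" using f by (simp add: poly_monom power_mult[symmetric] mult.commute)
    moreover have "p dvd (q ^ d) ^ f - 1 ^ f" using ordq_dvd d_def dvd_trans dvd_pow_diff by (metis power_one)
    ultimately show "p dvd poly g a" unfolding g_def by (simp add: dvd_diff_commute)
  qed
  have "\<forall>a\<in>S. \<forall>b\<in>S. a \<noteq> b \<longrightarrow> \<not> p dvd (a - b)"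
    unfolding S_def using ordq_distinct d_def by auto
  hence "[:p:] dvd g" using root_count[OF pr _ _ _ roots] dg cS S_def by simp
  thus ?thesis unfolding g_def C_def d_def .
qed

end

lemma lift: fixes p u :: int assumes "p dvd u - 1" "prime p"
  shows "p ^ (j + 1) dvd u ^ (nat p ^ j) - 1"
proof (induction j)
  case 0
  then show ?case using assms by simp
next
  case (Suc j)
  define v where "v = u ^ (nat p ^ j)"
  define P where "P = nat p"
  have pP: "int P = p" using P_def prime_ge_2_int[OF assms(2)] by simp
  have "p dvd p ^ (j + 1)" by simp
  hence "p dvd v - 1" using Suc v_def dvd_trans by blast
  have s: "p dvd (\<Sum>i<P. v ^ i)"
  proof -
    have "(\<Sum>i<P. v ^ i) = (\<Sum>i<P. (v ^ i - 1 ^ i)) + int P" by (simp add: sum_subtractf)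
    moreover have "p dvd (\<Sum>i<P. (v ^ i - 1 ^ i))"
      by (intro dvd_sum) (metis \<open>p dvd v - 1\<close> dvd_pow_diff dvd_trans)
    ultimately show ?thesis using pP by simp
  qed
  have "v ^ P - 1 = (v - 1) * (\<Sum>i<P. v ^ i)" using power_diff_1_eq by blast
  moreover have "p ^ (j + 1) * p dvd (v - 1) * (\<Sum>i<P. v ^ i)" using Suc s v_def by (simp add: mult_dvd_mono)
  moreover have "u ^ (nat p ^ Suc j) = v ^ P" unfolding v_def P_def by (simp add: power_mult[symmetric] mult.commute)
  ultimately show ?case by (simp add: ac_simps)
qed

lemma blockprod: "(\<Prod>e<d * n. G (e mod d)) = (\<Prod>f<d. (G f :: 'a::comm_monoid_mult)) ^ n"
proof (induction n)
  case 0
  then show ?case by simp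
next
  case (Suc n)
  have "{..<d * Suc n} = {..<d * n} \<union> {d * n..<d * n + d}" by auto
  hence "(\<Prod>e<d * Suc n. G (e mod d)) = (\<Prod>e<d * n. G (e mod d)) * (\<Prod>e\<in>{d * n..<d * n + d}. G (e mod d))"
    by (simp add: prod.union_disjoint ivl_disj_int)
  also have "(\<Prod>e\<in>{d * n..<d * n + d}. G (e mod d)) = (\<Prod>f<d. G f)"
  proof -
    have "(\<Prod>e\<in>{d * n..<d * n + d}. G (e mod d)) = (\<Prod>f\<in>{0..<d}. G ((f + d * n) mod d))"
      using prod.shift_bounds_nat_ivl[of "\<lambda>e. G (e mod d)" 0 "d * n" d] by (simp add: add.commute)
    also have "\<dots> = (\<Prod>f<d. G f)" by (intro prod.cong) auto
    finally show ?thesis .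
  qed
  finally show ?case using Suc by (simp add: mult.commute)
qed


definition eidx :: "nat \<Rightarrow> int" where "eidx i = (-1) ^ i * int (i div 2)"

context bmq begin

definition rr :: "nat \<Rightarrow> int" where "rr i = q ^ nat (eidx i mod int (ordq p q))"

definition Th :: "nat \<Rightarrow> int poly" where "Th n = (\<Prod>i\<in>{1..n}. [:- rr i, 1:])"

lemma Lq_gen: "\<exists>s\<in>Zp p. (rat_of_int q) powi e = of_int (q ^ nat (e mod int (ordq p q))) + of_int p * s"
proof -
  define d where "d = ordq p q"
  define f where "f = nat (e mod int d)"
  have d0: "0 < d" using ordq_pos[OF prime qnd] d_def by simp
  show ?thesis
  proof (cases "e \<ge> 0")
    case True
    have fe: "f = nat e mod d" unfolding f_def using True d0 by (simp add: nat_mod_distrib)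
    have "p dvd q ^ nat e - q ^ f * 1" using ordq_period[OF prime qnd, of "nat e"] fe d_def by simp
    then obtain s where "s \<in> Zp p" "rat_of_int (q ^ nat e) / rat_of_int 1 = of_int (q ^ f) + of_int p * s"
      using Zp_L[OF prime, of 1 "q ^ nat e" "q ^ f"] prime_ndvd1[OF prime] by blast
    moreover have "(rat_of_int q) powi e = rat_of_int (q ^ nat e)" using True by (simp add: power_int_def)
    ultimately show ?thesis unfolding f_def d_def by auto
  next
    case False
    define m where "m = nat (- e)"
    have i1: "int f = e mod int d" using d0 by (simp add: f_def)
    have i2: "int m = - e" using False m_def by simp
    have i3: "e = int d * (e div int d) + e mod int d" by simp
    have "int (f + m) = - (int d * (e div int d))" using i1 i2 i3 by linarith
    hence "int d dvd int (f + m)" by (metis dvd_minus_iff dvd_triv_left)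
    hence "(f + m) mod d = 0" by (simp only: int_dvd_int_iff) simp
    hence "p dvd q ^ (f + m) - 1" using ordq_period[OF prime qnd, of "f + m"] d_def by simp
    hence "p dvd 1 - q ^ f * q ^ m" by (simp add: power_add dvd_diff_commute)
    moreover have "\<not> p dvd q ^ m" using prime qnd prime_dvd_power by blast
    ultimately obtain s where "s \<in> Zp p" "rat_of_int 1 / rat_of_int (q ^ m) = of_int (q ^ f) + of_int p * s"
      using Zp_L[OF prime, of "q ^ m" 1 "q ^ f"] by blast
    moreover have "(rat_of_int q) powi e = rat_of_int 1 / rat_of_int (q ^ m)" using False m_def
      by (simp add: power_int_def power_inverse divide_inverse)
    ultimately show ?thesis unfolding f_def d_def by auto
  qed
qed

lemma Lq: "\<exists>s\<in>Zp p. q_idx q i = of_int (rr i) + of_int p * s"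
  unfolding q_idx_def rr_def using Lq_gen[of "eidx i"] unfolding eidx_def by simp

lemma qidx_Zp: "q_idx q i \<in> Zp p"
  using Lq[of i] Zp_add[OF prime Zi Zp_mult[OF prime Zi]] by metis

lemma sc_neg_int: "sc (of_int (- r)) a = - sc (of_int r) a"
  using sc_diffl[OF Z0 Zi, of r a] by simp

lemma act_lin: "act [:- r, 1:] a = sc (of_int (- r)) a + T a"
proof -
  have "act (pCons 1 0) a = a" using act_pCons[of 1 0 a] by simp
  thus ?thesis using act_pCons[of "-r" "pCons 1 0" a] by simp
qed

lemma phi_cong: "Phi sc psi q n x \<in> Rx x \<and> Phi sc psi q n x - act (Th n) x \<in> pRx x"
proof (induction n)
  case 0
  have "Th 0 = 1" unfolding Th_def by simp
  then show ?case using Rx_x act_one pRx_0 by simp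
next
  case (Suc n)
  define \<phi> where "\<phi> = Phi sc psi q n x"
  define a where "a = act (Th n) x"
  define r where "r = rr (Suc n)"
  define q' where "q' = q_idx q (Suc n)"
  have \<phi>R: "\<phi> \<in> Rx x" and D: "\<phi> - a \<in> pRx x" using Suc \<phi>_def a_def by auto
  have aR: "a \<in> Rx x" unfolding a_def using act_Rx Rx_x by blast
  obtain s where s: "s \<in> Zp p" "q' = of_int r + of_int p * s" using Lq r_def q'_def by blast
  have q'Z: "q' \<in> Zp p" using qidx_Zp q'_def by simp
  have Th: "Th (Suc n) = [:- r, 1:] * Th n" unfolding Th_def r_def by (simp add: mult.commute)
  have e1: "Phi sc psi q (Suc n) x = T \<phi> - sc q' \<phi>" unfolding T_def \<phi>_def q'_def by simp
  have e2: "act (Th (Suc n)) x = - sc (of_int r) a + T a"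
    unfolding Th act_mult a_def[symmetric] act_lin sc_neg_int by simp
  have e3: "sc q' \<phi> - sc (of_int r) \<phi> = sc (of_int p) (sc s \<phi>)"
  proof -
    have "sc q' \<phi> = sc (of_int r) \<phi> + sc (of_int p * s) \<phi>"
      unfolding s(2) by (rule sc_add[OF Zi Zp_mult[OF prime Zi s(1)]])
    also have "sc (of_int p * s) \<phi> = sc (of_int p) (sc s \<phi>)" by (rule sc_mult[OF Zi s(1)])
    finally show ?thesis by simp
  qed
  have pe3: "sc q' \<phi> - sc (of_int r) \<phi> \<in> pRx x" unfolding e3 using pRx_of Rx_sc[OF s(1) \<phi>R] by blast
  have pT: "T \<phi> - T a \<in> pRx x" using pRx_psi[OF q_unit D] unfolding T_def psi_diff[OF q_unit] .
  have pS: "sc (of_int r) \<phi> - sc (of_int r) a \<in> pRx x" using pRx_sc[OF Zi D] unfolding sc_diffr[OF Zi] .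
  have "Phi sc psi q (Suc n) x - act (Th (Suc n)) x
      = (T \<phi> - T a) - (sc (of_int r) \<phi> - sc (of_int r) a) - (sc q' \<phi> - sc (of_int r) \<phi>)"
    unfolding e1 e2 by (simp add: algebra_simps)
  hence "Phi sc psi q (Suc n) x - act (Th (Suc n)) x \<in> pRx x" using pT pS pe3 pRx_diff by metis
  moreover have "Phi sc psi q (Suc n) x \<in> Rx x" unfolding e1 T_def
    using Rx_diff Rx_psi[OF q_unit \<phi>R] Rx_sc[OF q'Z \<phi>R] by blast
  ultimately show ?case by simp
qed

end


context bmq begin

lemma theta_dvd:
  assumes "odd p" "L = ordq p q * nat p ^ j" "2 * L \<le> n"
  shows "\<exists>R. [:p:] dvd Th n - (Polynomial.monom 1 L - 1) * R"
proof -
  define d where "d = ordq p q"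
  define h where "h e = (if e = 0 then 1 else 2 * e)" for e :: nat
  define g where "g i = [:- rr i, 1:]" for i
  define C where "C = (\<Prod>f<d. [:-(q ^ f), 1:])"
  define B where "B = (\<Prod>e<L. [:-(q ^ (e mod d)), 1:])"
  have d0: "0 < d" using ordq_pos[OF prime qnd] d_def by simp
  have p2: "nat p \<ge> 2" "p > 0" using prime_ge_2_int[OF prime] by simp_all
  have L0: "0 < L" using assms(2) d0 p2 d_def by simp
  have inj: "inj_on h {..<L}" unfolding h_def by (rule inj_onI) (auto split: if_splits)
  have sub: "h ` {..<L} \<subseteq> {1..n}" using assms(3) L0 unfolding h_def by auto
  have rh: "g (h e) = [:-(q ^ (e mod d)), 1:]" for e
  proof -
    have "eidx (h e) = int e" unfolding h_def eidx_def by auto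
    hence "rr (h e) = q ^ (e mod d)" unfolding rr_def d_def by (simp add: of_nat_mod[symmetric] del: of_nat_mod)
    thus ?thesis unfolding g_def by simp
  qed
  have "Th n = prod g ({1..n} - h ` {..<L}) * prod g (h ` {..<L})"
    unfolding Th_def g_def[symmetric] using prod.subset_diff[OF sub] by simp
  also have "prod g (h ` {..<L}) = B" unfolding prod.reindex[OF inj] B_def using rh by simp
  finally have ThB: "Th n = prod g ({1..n} - h ` {..<L}) * B" .
  have BC: "B = C ^ (nat p ^ j)" unfolding B_def C_def assms(2) d_def[symmetric]
    using blockprod[of "\<lambda>f. [:-(q ^ f), 1:]" d "nat p ^ j"] by simp
  have "[:p:] dvd C - (Polynomial.monom 1 d - 1)" unfolding C_def d_def using cyclo[OF prime qnd] .
  hence "[:p:] dvd C ^ (nat p ^ j) - (Polynomial.monom 1 d - 1) ^ (nat p ^ j)" by (rule cong_pow_dvd)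
  moreover have "[:p:] dvd (Polynomial.monom 1 d - 1) ^ (nat p ^ j) - (Polynomial.monom 1 L - 1)"
    using frob[OF prime assms(1), of d j] assms(2) d_def by simp
  ultimately have "[:p:] dvd B - (Polynomial.monom 1 L - 1)" unfolding BC
    by (metis (no_types, lifting) diff_add_cancel dvd_add add_diff_eq)
  hence "[:p:] dvd (B - (Polynomial.monom 1 L - 1)) * prod g ({1..n} - h ` {..<L})" by (rule dvd_mult2)
  moreover have "Th n - (Polynomial.monom 1 L - 1) * prod g ({1..n} - h ` {..<L})
      = (B - (Polynomial.monom 1 L - 1)) * prod g ({1..n} - h ` {..<L})"
    unfolding ThB by (simp add: algebra_simps)
  ultimately show ?thesis by metis
qed

lemma final_loc:
  assumes "odd p" "L = ordq p q * nat p ^ j" "2 * L \<le> n"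
    and TL: "\<forall>z\<in>Rx x. (T ^^ L) z - z \<in> pRx x"
  shows "Phi sc psi q n x \<in> pRx x"
proof -
  obtain R where R: "[:p:] dvd Th n - (Polynomial.monom 1 L - 1) * R" using theta_dvd[OF assms(1-3)] by blast
  define W where "W = act R x"
  have WR: "W \<in> Rx x" unfolding W_def using act_Rx Rx_x by blast
  have "act (Th n) x = act ((Polynomial.monom 1 L - 1) * R) x + act (Th n - (Polynomial.monom 1 L - 1) * R) x"
    using act_add[of "(Polynomial.monom 1 L - 1) * R" "Th n - (Polynomial.monom 1 L - 1) * R" x] by simp
  also have "act ((Polynomial.monom 1 L - 1) * R) x = (T ^^ L) W - W"
    unfolding act_mult W_def[symmetric] act_diff act_monom act_one ..
  finally have e: "act (Th n) x = ((T ^^ L) W - W) + act (Th n - (Polynomial.monom 1 L - 1) * R) x" .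
  have "act (Th n) x \<in> pRx x" unfolding e using pRx_add TL WR act_pdvd[OF R Rx_x] by blast
  moreover have "Phi sc psi q n x - act (Th n) x \<in> pRx x" using phi_cong by blast
  ultimately show ?thesis using pRx_add by fastforce
qed

end


lemma ordq_le: fixes p q :: int assumes pr: "prime p" and qn: "\<not> p dvd q"
  shows "ordq p q \<le> nat p - 1"
proof -
  have r: "residues p" unfolding residues_def using prime_gt_1_int[OF assms(1)] by simp
  have "coprime q p" using assms prime_imp_coprime coprime_commute by blast
  hence c: "[q ^ totient (nat p) = 1] (mod p)" using residues.euler_theorem[OF r] by blast
  define n where "n = nat p"
  have pn: "int n = p" using prime_ge_2_int[OF pr] n_def by simp
  have np: "prime n" using pr unfolding pn[symmetric] prime_int_nat_transfer by simp
  have t: "totient (nat p) = nat p - 1" using totient_prime[OF np] n_def by simp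
  have "0 < nat p - 1" using prime_ge_2_int[OF pr] by simp
  moreover have "p dvd q ^ (nat p - 1) - 1" using c t by (metis cong_iff_dvd_diff)
  ultimately show ?thesis unfolding ordq_def by (metis (mono_tags, lifting) Least_le)
qed

theorem lemma4p3:
  fixes p q :: int and sc psi :: "rat \<Rightarrow> 'm::ab_group_add \<Rightarrow> 'm" and x :: 'm
  assumes "prime p" and "odd p"
    and "primitive_mod q (p ^ 2)"
    and "Bousfield_module p sc psi"
  shows "\<exists>k::nat. k \<ge> 1 \<and> (\<forall>n::nat. n \<ge> nat (p ^ k * (p - 1)) \<longrightarrow>
           Phi sc psi q n x \<in> smul_set sc (of_int p) (Rspan p sc psi x))"
proof -
  have RM: "R_module p sc psi" using assms(4) unfolding Bousfield_module_def by blast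
  have cc: "\<forall>m::nat. m \<ge> 1 \<longrightarrow> (\<exists>k::nat. \<forall>j\<in>Zp_units p. \<forall>j'\<in>Zp_units p.
          (j - j') / of_int (p ^ k) \<in> Zp p \<longrightarrow>
          (\<forall>y\<in>Rspan p sc psi x.
             psi j y - psi j' y \<in> smul_set sc (of_int (p ^ m)) (Rspan p sc psi x)))"
    using assms(4) unfolding Bousfield_module_def by blast
  have qnd: "\<not> p dvd q"
  proof
    assume "p dvd q"
    moreover have "coprime q (p ^ 2)" using assms(3) unfolding primitive_mod_def by blast
    moreover have "p dvd p ^ 2" by simp
    ultimately have "is_unit p" using coprime_common_divisor by blast
    thus False using assms(1) not_prime_unit by blast
  qed
  have bm0: "bm p sc psi" by (rule bm.intro) (rule assms(1), rule RM)
  have bmq0: "bmq p sc psi q" by (rule bmq.intro[OF bm0]) (rule bmq_axioms.intro, rule qnd)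
  interpret bmq p sc psi q by (rule bmq0)
  obtain k0 where k0: "\<forall>j\<in>Zp_units p. \<forall>j'\<in>Zp_units p.
          (j - j') / of_int (p ^ k0) \<in> Zp p \<longrightarrow>
          (\<forall>y\<in>Rspan p sc psi x.
             psi j y - psi j' y \<in> smul_set sc (of_int (p ^ 1)) (Rspan p sc psi x))"
    using cc by blast
  define d where "d = ordq p q"
  define P where "P = nat p"
  define L where "L = d * P ^ k0"
  have pP: "int P = p" using P_def prime_ge_2_int[OF assms(1)] by simp
  have "p \<noteq> 2" using assms(2) by auto
  hence "p \<ge> 3" using prime_ge_2_int[OF assms(1)] by linarith
  hence P3: "P \<ge> 3" unfolding P_def by (simp add: le_nat_iff)
  have dP: "d \<le> P - 1" using ordq_le[OF assms(1) qnd] d_def P_def by simp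
  have "p ^ (k0 + 1) dvd (q ^ d) ^ (nat p ^ k0) - 1"
    using lift[OF ordq_dvd[OF assms(1) qnd] assms(1), of k0] d_def by simp
  moreover have "(q ^ d) ^ (nat p ^ k0) = q ^ L" unfolding L_def P_def by (simp add: power_mult)
  moreover have "p ^ k0 dvd p ^ (k0 + 1)" by (simp add: le_imp_power_dvd)
  ultimately have dvdL: "p ^ k0 dvd q ^ L - 1" using dvd_trans by metis
  have TL: "\<forall>z\<in>Rx x. (T ^^ L) z - z \<in> pRx x"
  proof
    fix z assume z: "z \<in> Rx x"
    have u: "rat_of_int (q ^ L) \<in> Zp_units p"
      using Zp_units_int[OF assms(1)] qnd assms(1) prime_dvd_power by blast
    obtain t where t: "q ^ L - 1 = p ^ k0 * t" using dvdL by blast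
    have pk: "rat_of_int (p ^ k0) \<noteq> 0" using prime_ge_2_int[OF assms(1)] by simp
    have "(rat_of_int (q ^ L) - 1) / of_int (p ^ k0) = of_int t"
    proof -
      have "rat_of_int (q ^ L) - 1 = of_int (q ^ L - 1)" by simp
      also have "\<dots> = of_int (p ^ k0) * of_int t" unfolding t by simp
      finally show ?thesis using pk by simp
    qed
    hence "(rat_of_int (q ^ L) - 1) / of_int (p ^ k0) \<in> Zp p" using Zi by simp
    hence "psi (of_int (q ^ L)) z - psi 1 z \<in> smul_set sc (of_int (p ^ 1)) (Rspan p sc psi x)"
      using k0 u Zp_units_1 z unfolding Rx_def by blast
    thus "(T ^^ L) z - z \<in> pRx x" unfolding Tpow_psi pRx_def Rx_def by simp
  qed
  show ?thesis
  proof (intro exI[of _ "k0 + 1"] conjI allI impI)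
    fix n :: nat
    assume n: "n \<ge> nat (p ^ (k0 + 1) * (p - 1))"
    have "nat (p ^ (k0 + 1) * (p - 1)) = P ^ (k0 + 1) * (P - 1)"
    proof -
      have a: "nat (int P - 1) = P - 1" by (cases P) auto
      show ?thesis unfolding pP[symmetric] using a by (simp add: nat_mult_distrib nat_power_eq)
    qed
    hence n': "n \<ge> P ^ (k0 + 1) * (P - 1)" using n by simp
    have "2 * L \<le> 2 * ((P - 1) * P ^ k0)" unfolding L_def using dP by simp
    also have "\<dots> \<le> P * ((P - 1) * P ^ k0)" using P3 by (intro mult_le_mono) auto
    also have "\<dots> = P ^ (k0 + 1) * (P - 1)" by (simp add: ac_simps)
    finally have "2 * L \<le> n" using n' by linarith
    hence "Phi sc psi q n x \<in> pRx x"
      using final_loc[OF assms(2) _ _ TL, of k0 n] L_def d_def P_def by simp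
    thus "Phi sc psi q n x \<in> smul_set sc (of_int p) (Rspan p sc psi x)" unfolding pRx_def Rx_def .
  qed simp
qed


end
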